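(* Let $n$ be a positive integer and let $r_\star$ be an integer maximising $q_n^r$ over $r$. Then either \[ r_\star = \left\lceil \frac{1}{10}\left(5n+2-\sqrt{5n^2+20n+24}\right)\right\rceil \] or \[ r_\star = \frac{1}{10}\left(5n+2-\sqrt{5n^2+20n+24}\right)+1. \]
   Context: $P_n$ is the path on $[n]=\{1,\dots,n\}$ with edges $\{i,i+1\}$. $Q^{(r)}(P_n)$ is the family of $r$-element subsets of $[n]$ containing no two consecutive integers, and $q_n^r=|Q^{(r)}(P_n)|$. *)

theory Defs
  imports Complex_Main
begin

definition Qfam :: "nat \<Rightarrow> nat \<Rightarrow> nat set set" where
  "Qfam n r = {S. S \<subseteq> {1..n} \<and> card S = r \<and> (\<forall>i. \<not> (i \<in> S \<and> Suc i \<in> S))}"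

definition qnum :: "nat \<Rightarrow> nat \<Rightarrow> nat" where
  "qnum n r = card (Qfam n r)"

end

theory Submission
  imports Defs
begin

lemma Qfam_fin: "finite (Qfam n r)"
  by (rule finite_subset[of _ "Pow {1..n}"]) (auto simp: Qfam_def)

lemma Qfam_0: "Qfam n 0 = {{}}"
proof -
  have "S \<subseteq> {1..n} \<Longrightarrow> card S = 0 \<Longrightarrow> S = {}" for S
    by (meson card_0_eq finite_atLeastAtMost finite_subset)
  thus ?thesis by (auto simp: Qfam_def)
qed

lemma Qfam_zero_n: "Qfam 0 (Suc r) = {}"
  by (auto simp: Qfam_def)

lemma Qfam_one: "Qfam (Suc 0) (Suc r) = (if r = 0 then {{1}} else {})"
proof -
  have "S \<subseteq> {Suc 0} \<Longrightarrow> card S = Suc r \<Longrightarrow> r = 0 \<and> S = {Suc 0}" for S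
  proof -
    assume a: "S \<subseteq> {Suc 0}" "card S = Suc r"
    hence "S = {} \<or> S = {Suc 0}" by blast
    thus ?thesis using a(2) by auto
  qed
  moreover have "{Suc 0} \<in> Qfam (Suc 0) (Suc 0)" by (auto simp: Qfam_def)
  ultimately show ?thesis unfolding Qfam_def by auto
qed

lemma Qfam_step:
  "Qfam (Suc (Suc n)) (Suc r) = Qfam (Suc n) (Suc r) \<union> insert (Suc (Suc n)) ` Qfam n r"
proof (rule set_eqI, rule iffI)
  fix S assume S: "S \<in> Qfam (Suc (Suc n)) (Suc r)"
  hence sub: "S \<subseteq> {1..Suc (Suc n)}" and cS: "card S = Suc r"
    and nc: "\<forall>i. \<not> (i \<in> S \<and> Suc i \<in> S)" by (auto simp: Qfam_def)
  have fS: "finite S" using sub finite_subset by blast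
  show "S \<in> Qfam (Suc n) (Suc r) \<union> insert (Suc (Suc n)) ` Qfam n r"
  proof (cases "Suc (Suc n) \<in> S")
    case False
    hence "S \<subseteq> {1..Suc n}" using sub by (auto simp: le_Suc_eq)
    thus ?thesis using cS nc by (auto simp: Qfam_def)
  next
    case True
    have "Suc n \<notin> S" using nc True by blast
    hence "S - {Suc (Suc n)} \<subseteq> {1..n}" using sub by (auto simp: le_Suc_eq)
    moreover have "card (S - {Suc (Suc n)}) = r" using cS True fS by simp
    moreover have "\<forall>i. \<not> (i \<in> S - {Suc (Suc n)} \<and> Suc i \<in> S - {Suc (Suc n)})" using nc by blast
    ultimately have "S - {Suc (Suc n)} \<in> Qfam n r" unfolding Qfam_def by blast
    moreover have "S = insert (Suc (Suc n)) (S - {Suc (Suc n)})" using True by blast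
    ultimately show ?thesis by blast
  qed
next
  fix S assume "S \<in> Qfam (Suc n) (Suc r) \<union> insert (Suc (Suc n)) ` Qfam n r"
  then show "S \<in> Qfam (Suc (Suc n)) (Suc r)"
  proof
    assume "S \<in> Qfam (Suc n) (Suc r)"
    thus ?thesis by (auto simp: Qfam_def)
  next
    assume "S \<in> insert (Suc (Suc n)) ` Qfam n r"
    then obtain T where T: "T \<in> Qfam n r" and ST: "S = insert (Suc (Suc n)) T" by blast
    have sub: "T \<subseteq> {1..n}" and cT: "card T = r" and nc: "\<forall>i. \<not> (i \<in> T \<and> Suc i \<in> T)"
      using T by (auto simp: Qfam_def)
    have fT: "finite T" using sub finite_subset by blast
    have nin: "Suc (Suc n) \<notin> T" "Suc n \<notin> T" using sub by auto
    have "card S = Suc r" using ST fT nin cT by simp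
    moreover have "S \<subseteq> {1..Suc (Suc n)}" using ST sub by auto
    moreover have "\<forall>i. \<not> (i \<in> S \<and> Suc i \<in> S)"
      using nc nin sub unfolding ST by auto
    ultimately show ?thesis by (simp add: Qfam_def)
  qed
qed

lemma qnum_step: "qnum (Suc (Suc n)) (Suc r) = qnum (Suc n) (Suc r) + qnum n r"
proof -
  have inj: "inj_on (insert (Suc (Suc n))) (Qfam n r)"
    unfolding inj_on_def Qfam_def by (auto) (metis atLeastAtMost_iff insert_ident not_less_eq_eq le_Suc_eq subsetD)+
  have disj: "Qfam (Suc n) (Suc r) \<inter> insert (Suc (Suc n)) ` Qfam n r = {}"
    by (auto simp: Qfam_def)
  show ?thesis unfolding qnum_def Qfam_step
    by (subst card_Un_disjoint) (use Qfam_fin disj inj card_image in auto)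
qed

lemma qnum_closed: "qnum n r = (n + 1 - r) choose r"
proof (induction n arbitrary: r rule: less_induct)
  case (less n)
  show ?case
  proof (cases r)
    case 0 thus ?thesis by (simp add: qnum_def Qfam_0)
  next
    case (Suc k)
    show ?thesis
    proof (cases n)
      case 0 thus ?thesis using Suc by (simp add: qnum_def Qfam_zero_n)
    next
      case (Suc n1)
      show ?thesis
      proof (cases n1)
        case 0 thus ?thesis using Suc \<open>r = Suc k\<close> by (simp add: qnum_def Qfam_one)
      next
        case (Suc n2)
        have "qnum n r = qnum (Suc n2) (Suc k) + qnum n2 k"
          using qnum_step \<open>n = Suc n1\<close> Suc \<open>r = Suc k\<close> by simp
        also have "\<dots> = ((n2 + 2 - Suc k) choose Suc k) + ((n2 + 1 - k) choose k)"
          using less \<open>n = Suc n1\<close> Suc by simp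
        also have "\<dots> = (n + 1 - r) choose r"
        proof (cases "k \<le> n2 + 1")
          case True
          hence "n + 1 - r = Suc (n2 + 1 - k)" "n2 + 2 - Suc k = n2 + 1 - k"
            using \<open>n = Suc n1\<close> Suc \<open>r = Suc k\<close> by auto
          thus ?thesis using \<open>r = Suc k\<close> by simp
        next
          case False
          thus ?thesis using \<open>n = Suc n1\<close> Suc \<open>r = Suc k\<close> by simp
        qed
        finally show ?thesis .
      qed
    qed
  qed
qed

lemma ratio:
  assumes "2*r \<le> n"
  shows "qnum n (Suc r) * ((r+1)*(n+1-r)) = qnum n r * ((n-2*r)*(n-2*r+1))"
proof -
  define m where "m = n - 2*r"
  have n: "n = m + 2*r" using assms m_def by simp
  have q1: "qnum n (Suc r) = (m+r) choose Suc r" unfolding qnum_closed n by (simp add: algebra_simps)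
  have q0: "qnum n r = (m+r+1) choose r" unfolding qnum_closed n by (simp add: algebra_simps)
  have a: "Suc r * ((m+r) choose Suc r) = m * ((m+r) choose r)"
  proof (cases m)
    case 0 thus ?thesis by simp
  next
    case (Suc b)
    thus ?thesis using Suc_times_binomial_add[of r b] by (simp add: algebra_simps)
  qed
  have b: "(m+1) * ((m+r+1) choose r) = (m+r+1) * ((m+r) choose r)"
    using binomial_absorb_comp[of "m+r+1" r] by simp
  have x: "(r+1)*(n+1-r) = Suc r * (m+r+1)" by (simp add: n)
  have "qnum n (Suc r) * ((r+1)*(n+1-r)) = (Suc r * ((m+r) choose Suc r)) * (m+r+1)"
    unfolding q1 x by (simp only: mult_ac)
  also have "\<dots> = m * ((m+1) * ((m+r+1) choose r))" unfolding a b by (simp add: algebra_simps)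
  also have "\<dots> = qnum n r * ((n-2*r)*(n-2*r+1))" unfolding q0 m_def[symmetric] by (simp add: algebra_simps)
  finally show ?thesis .
qed

lemma gid:
  assumes "2*r \<le> n"
  shows "real ((n-2*r)*(n-2*r+1)) - real ((r+1)*(n+1-r))
         = 5 * (real r)^2 - (5 * real n + 2) * real r + (real n)^2 - 1"
proof -
  obtain m where n: "n = m + 2*r" using assms by (metis le_add_diff_inverse2)
  have "n - 2*r = m" "n+1-r = m+r+1" using n by auto
  thus ?thesis unfolding n by (simp add: algebra_simps power2_eq_square)
qed

lemma qpos: "2*r \<le> n \<Longrightarrow> qnum n r > 0"
  unfolding qnum_closed by simp

lemma inc:
  assumes "2*r \<le> n" "5 * (real r)^2 - (5 * real n + 2) * real r + (real n)^2 - 1 > 0"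
  shows "qnum n r < qnum n (Suc r)"
proof -
  let ?X = "(r+1)*(n+1-r)" and ?Y = "(n-2*r)*(n-2*r+1)"
  have "real ?X < real ?Y" using gid[OF assms(1)] assms(2) by linarith
  hence XY: "?X < ?Y" by (simp only: of_nat_less_iff)
  have e: "qnum n (Suc r) * ?X = qnum n r * ?Y" by (rule ratio[OF assms(1)])
  have "qnum n r * ?X < qnum n r * ?Y" using XY qpos[OF assms(1)] by (rule mult_strict_left_mono)
  hence "qnum n r * ?X < qnum n (Suc r) * ?X" using e by (simp only:)
  thus ?thesis by (metis mult_less_cancel2)
qed

lemma dec:
  assumes "2*r \<le> n" "5 * (real r)^2 - (5 * real n + 2) * real r + (real n)^2 - 1 < 0"
  shows "qnum n (Suc r) < qnum n r"
proof -
  let ?X = "(r+1)*(n+1-r)" and ?Y = "(n-2*r)*(n-2*r+1)"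
  have "real ?Y < real ?X" using gid[OF assms(1)] assms(2) by linarith
  hence XY: "?Y < ?X" by (simp only: of_nat_less_iff)
  have e: "qnum n (Suc r) * ?X = qnum n r * ?Y" by (rule ratio[OF assms(1)])
  have "qnum n r * ?Y < qnum n r * ?X" using XY qpos[OF assms(1)] by (rule mult_strict_left_mono)
  hence "qnum n (Suc r) * ?X < qnum n r * ?X" using e by (simp only:)
  thus ?thesis by (metis mult_less_cancel2)
qed

theorem mainTheorem3:
  fixes n rs :: nat
  assumes "n \<ge> 1"
    and "\<forall>r. qnum n r \<le> qnum n rs"
  shows "real rs = of_int \<lceil>(5 * real n + 2 - sqrt (5 * (real n)^2 + 20 * real n + 24)) / 10\<rceil>
       \<or> real rs = (5 * real n + 2 - sqrt (5 * (real n)^2 + 20 * real n + 24)) / 10 + 1"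
proof -
  define D where "D = 5 * (real n)^2 + 20 * real n + 24"
  define s where "s = sqrt D"
  define r0 where "r0 = (5 * real n + 2 - s) / 10"
  have D0: "D \<ge> 0" unfolding D_def by (intro add_nonneg_nonneg) auto
  have ss: "s^2 = D" unfolding s_def using D0 by simp
  have s0: "s \<ge> 0" unfolding s_def using D0 by simp
  have s2: "s > 2" unfolding s_def D_def
    by (rule real_less_rsqrt) (simp add: power2_eq_square add_pos_nonneg)
  have sup: "s \<le> 5 * real n + 12"
    unfolding s_def D_def by (rule real_sqrt_le_iff[THEN iffD2, of _ "(5 * real n + 12)^2", simplified]) (simp add: power2_eq_square algebra_simps)
  have key: "(5 * real n + 2 - 10 * x)^2 - D = 20 * (5 * x^2 - (5 * real n + 2) * x + (real n)^2 - 1)" for x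
    unfolding D_def by (simp add: power2_eq_square algebra_simps)
  have low: "r0 \<le> real rs"
  proof (rule ccontr)
    assume "\<not> r0 \<le> real rs"
    hence lt: "real rs < r0" by simp
    hence "2 * real rs \<le> real n" using s2 unfolding r0_def by simp
    hence le: "2*rs \<le> n" by linarith
    have p: "5 * real n + 2 - 10 * real rs > s" using lt unfolding r0_def by simp
    hence "s^2 < (5 * real n + 2 - 10 * real rs)^2" using s0 by (intro power_strict_mono) auto
    hence "5 * (real rs)^2 - (5 * real n + 2) * real rs + (real n)^2 - 1 > 0" using key[of "real rs"] ss by simp
    from inc[OF le this] assms(2) show False by (meson leD)
  qed
  have qpos': "qnum n rs > 0" using assms(2) qpos[of 0 n] by (metis less_le_trans mult_0_right zero_le)
  hence "rs \<le> n + 1 - rs" unfolding qnum_closed by (meson zero_less_binomial_iff)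
  hence le1: "2 * rs \<le> n + 1" by simp
  have up: "real rs \<le> r0 + 1"
  proof (rule ccontr)
    assume a: "\<not> real rs \<le> r0 + 1"
    have "r0 \<ge> -1" using sup unfolding r0_def by simp
    hence rs1: "rs \<ge> 1" using a by linarith
    hence "real (rs - 1) = real rs - 1" by (simp add: of_nat_diff)
    hence gt: "r0 < real (rs - 1)" using a by linarith
    have le: "2*(rs-1) \<le> n" using le1 rs1 by simp
    have "5 * real n + 2 - 10 * real (rs-1) < s" using gt unfolding r0_def by simp
    moreover have "0 < 5 * real n + 2 - 10 * real (rs-1)"
    proof -
      have "real (2*(rs-1)) \<le> real n" using le by (simp only: of_nat_le_iff)
      thus ?thesis by simp
    qed
    ultimately have "(5 * real n + 2 - 10 * real (rs-1))^2 < s^2" by (intro power_strict_mono) auto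
    hence "5 * (real (rs-1))^2 - (5 * real n + 2) * real (rs-1) + (real n)^2 - 1 < 0"
      using key[of "real (rs-1)"] ss by simp
    from dec[OF le this] have "qnum n (Suc (rs-1)) < qnum n (rs-1)" .
    moreover have "Suc (rs-1) = rs" using rs1 by simp
    moreover have "qnum n (rs-1) \<le> qnum n rs" using assms(2) by blast
    ultimately show False by simp
  qed
  have c: "\<lceil>r0\<rceil> \<le> int rs" using low by (simp add: ceiling_le_iff)
  show ?thesis
  proof (cases "int rs = \<lceil>r0\<rceil>")
    case True
    hence "real rs = of_int \<lceil>r0\<rceil>" by (metis of_int_of_nat_eq)
    thus ?thesis unfolding r0_def s_def D_def by blast
  next
    case False
    hence "\<lceil>r0\<rceil> + 1 \<le> int rs" using c by simp
    hence "r0 + 1 \<le> real rs" using le_of_int_ceiling[of r0] by linarith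
    hence "real rs = r0 + 1" using up by simp
    thus ?thesis unfolding r0_def s_def D_def by simp
  qed
qed

end
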